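(* In the algebra $\mathcal{SL}_{\hbar,q}$ generated by $b,c,g$ with relations $$q^2gb-bg=\hbar(q+q^{-1})b,\quad gc-q^2cg=-\hbar(q+q^{-1})c,\quad (q^2+1)(bc-cb)+(q^2-1)g^2=\hbar(q+q^{-1})g,$$ the matrix $$L=\begin{pmatrix} q[2]_q^{-1}g & b\\ c & -q^{-1}[2]_q^{-1}g\end{pmatrix}$$ satisfies $L^2-q^{-1}\hbar L+\sigma\,\mathrm{id}=0$, where $$\sigma=-[2]_q^{-1}\mathrm{Tr}_RL^2=-[2]_q^{-1}\big([2]_q^{-1}g^2+q^{-1}bc+q\,cb\big)$$ is central in $\mathcal{SL}_{\hbar,q}$. Consequently, in the quotient $\mathcal{SL}_{\hbar,q}/\langle\sigma-\alpha\rangle$ ($\alpha\in\mathbb{K}$ with $q^{-2}\hbar^2-4\alpha\ne0$), with $\mu_{0,1}=(q^{-1}\hbar\mp\sqrt{q^{-2}\hbar^2-4\alpha})/2$ and $e_0=(L-\mu_1)/(\mu_0-\mu_1)$, $e_1=(L-\mu_0)/(\mu_1-\mu_0)$, $$\mathrm{Tr}_Re_0=\frac{[2]_q}{2}+\frac{[2]_q\hbar}{2\sqrt{\hbar^2-4\alpha q^2}},\qquad \mathrm{Tr}_Re_1=\frac{[2]_q}{2}-\frac{[2]_q\hbar}{2\sqrt{\hbar^2-4\alpha q^2}},$$ with $\sqrt{\hbar^2-4\alpha q^2}=q\sqrt{q^{-2}\hbar^2-4\alpha}$.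
   Context: Here $q$ is generic, $\hbar\in\mathbb{K}$, $[m]_q=(q^m-q^{-m})/(q-q^{-1})$, so $[2]_q=q+q^{-1}$. Products of matrices with noncommuting entries are $(MN)_i^{\;j}=\sum_aM_i^{\;a}N_a^{\;j}$ (row index $i$, column index $j$). For a $2\times2$ matrix $M$ with entries in the algebra, $\mathrm{Tr}_RM=q^{-1}M_1^{\;1}+q\,M_2^{\;2}$ (the categorical trace for the Hecke symmetry $R$ with $R(x_1\otimes x_1)=q\,x_1\otimes x_1$, $R(x_2\otimes x_2)=q\,x_2\otimes x_2$, and matrix $\begin{pmatrix}\lambda&1\\1&0\end{pmatrix}$, $\lambda=q-q^{-1}$, on the span of $x_1\otimes x_2,x_2\otimes x_1$). The algebra above is the traceless part $\mathcal{SL}_{\hbar,q}$ of the modified reflection equation algebra for this $R$, with $g=a-d$ where $L=\begin{pmatrix}a&b\\c&d\end{pmatrix}$ and $q^{-1}a+qd=0$. The quotient by $\sigma-\alpha$ is the quantum non-commutative sphere. *)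

theory Defs
  imports Main
begin

text \<open>2x2 matrices with (possibly noncommuting) entries, stored as
  (M11, M12, M21, M22); product (MN)_i^j = sum_a M_i^a N_a^j.\<close>
type_synonym 'a mat2 = "'a \<times> 'a \<times> 'a \<times> 'a"

fun m2mul :: "'a::ring_1 mat2 \<Rightarrow> 'a mat2 \<Rightarrow> 'a mat2" where
  "m2mul (a, b, c, d) (e, f, g, h) = (a*e + b*g, a*f + b*h, c*e + d*g, c*f + d*h)"

fun m2add :: "'a::ring_1 mat2 \<Rightarrow> 'a mat2 \<Rightarrow> 'a mat2" where
  "m2add (a, b, c, d) (e, f, g, h) = (a + e, b + f, c + g, d + h)"

fun m2smul :: "'a::ring_1 \<Rightarrow> 'a mat2 \<Rightarrow> 'a mat2" where
  "m2smul s (a, b, c, d) = (s*a, s*b, s*c, s*d)"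

definition m2id :: "'a::ring_1 mat2" where
  "m2id = (1, 0, 0, 1)"

definition m2zero :: "'a::ring_1 mat2" where
  "m2zero = (0, 0, 0, 0)"

definition qtwo :: "'k::field \<Rightarrow> 'k" where
  "qtwo q = q + inverse q"

fun trR :: "('k::field \<Rightarrow> 'a::ring_1) \<Rightarrow> 'k \<Rightarrow> 'a mat2 \<Rightarrow> 'a" where
  "trR emb q (a, b, c, d) = emb (inverse q) * a + emb q * d"

text \<open>A K-algebra structure on a ring A: a unital ring homomorphism K -> A with central image.\<close>
definition is_algebra_emb :: "('k::field \<Rightarrow> 'a::ring_1) \<Rightarrow> bool" where
  "is_algebra_emb emb \<longleftrightarrow>
     emb 1 = 1 \<and> (\<forall>x y. emb (x + y) = emb x + emb y) \<and>
     (\<forall>x y. emb (x * y) = emb x * emb y) \<and> (\<forall>x y. emb x * y = y * emb x)"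

definition Lmat :: "('k::field \<Rightarrow> 'a::ring_1) \<Rightarrow> 'k \<Rightarrow> 'a \<Rightarrow> 'a \<Rightarrow> 'a \<Rightarrow> 'a mat2" where
  "Lmat emb q b c g = (emb (q / qtwo q) * g, b, c, - emb (inverse q / qtwo q) * g)"

end

theory Submission
  imports Defs
begin

locale SLq =
  fixes E :: "'k::field_char_0 \<Rightarrow> 'a::ring_1" and q hbar qi ri :: 'k and b c g :: 'a
  assumes qi_def: "qi = inverse q" and ri_def: "ri = inverse (q^2 + 1)"
    and alg: "is_algebra_emb E"
    and qnz: "q \<noteq> 0" and q2: "q^2 + 1 \<noteq> 0"
    and rel1: "E (q^2) * g * b - b * g = E (hbar * qtwo q) * b"
    and rel2: "g * c - E (q^2) * c * g = - (E (hbar * qtwo q) * c)"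
    and rel3: "E (q^2 + 1) * (b * c - c * b) + E (q^2 - 1) * g^2 = E (hbar * qtwo q) * g"
begin

lemma E_add: "E (x + y) = E x + E y" using alg unfolding is_algebra_emb_def by blast
lemma E_mult: "E (x * y) = E x * E y" using alg unfolding is_algebra_emb_def by blast
lemma E_one: "E 1 = 1" using alg unfolding is_algebra_emb_def by blast
lemma E_cent: "E x * y = y * E x" using alg unfolding is_algebra_emb_def by blast
lemma E_zero: "E 0 = 0" using E_add[of 0 0] by simp
lemma E_uminus: "E (- x) = - E x" using E_add[of x "-x"] E_zero by (simp add: add_eq_0_iff2)
lemma E_diff: "E (x - y) = E x - E y" using E_add[of x "-y"] E_uminus by simp

lemma merge1: "E k * (E l * y) = E (k * l) * y" by (simp add: E_mult mult.assoc)
lemma merge2: "E k * E l = E (k * l)" by (simp add: E_mult)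
lemma neg1: "- (E k * y) = E (- k) * y" by (simp add: E_uminus)
lemma neg2: "- E k = E (- k)" by (simp add: E_uminus)
lemma diff1: "E k * y - E l * z = E k * y + E (- l) * z" by (simp add: E_uminus)

lemma comm_b1: "b * E k = E k * b" by (simp add: E_cent)
lemma comm_b2: "b * (E k * y) = E k * (b * y)" by (metis E_cent mult.assoc)
lemma comm_c1: "c * E k = E k * c" by (simp add: E_cent)
lemma comm_c2: "c * (E k * y) = E k * (c * y)" by (metis E_cent mult.assoc)
lemma comm_g1: "g * E k = E k * g" by (simp add: E_cent)
lemma comm_g2: "g * (E k * y) = E k * (g * y)" by (metis E_cent mult.assoc)

lemma Einv: "k \<noteq> 0 \<Longrightarrow> E (inverse k) * (E k * y) = y"
  by (simp add: merge1 E_one)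

lemma qs: "q * qi = 1" using qnz by (simp add: qi_def)
lemma qr: "ri * (q * q + 1) = 1" using q2 by (simp add: ri_def power2_eq_square)
lemma qtwo_eq: "qtwo q = q + qi" by (simp add: qtwo_def qi_def)
lemma inv_qtwo: "inverse (qtwo q) = q * ri"
  using qnz q2 by (simp add: qtwo_def ri_def field_simps power2_eq_square)

lemma gb: "g * b = E (qi * qi) * (b * g) + E (hbar * (q + qi) * qi * qi) * b"
proof -
  have "E (q^2) * (g * b) = b * g + E (hbar * qtwo q) * b"
    using rel1 by (simp add: mult.assoc algebra_simps)
  hence "E (inverse (q^2)) * (E (q^2) * (g * b)) = E (inverse (q^2)) * (b * g + E (hbar * qtwo q) * b)"
    by simp
  thus ?thesis using qnz by (simp add: Einv distrib_left merge1 field_simps E_one qi_def qtwo_def power2_eq_square)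
qed

lemma gc: "g * c = E (q * q) * (c * g) + E (- (hbar * (q + qi))) * c"
proof -
  have "g * c = E (q * q) * (c * g) - E (hbar * (q + qi)) * c"
    using rel2 by (simp add: mult.assoc algebra_simps qtwo_eq power2_eq_square)
  thus ?thesis by (simp add: E_uminus)
qed

lemma cb: "c * b = b * c + E (- (hbar * (q + qi) * ri)) * g + E ((q * q - 1) * ri) * (g * g)"
proof -
  have "E (q^2 + 1) * (c * b) = E (q^2 + 1) * (b * c) - E (hbar * qtwo q) * g + E (q^2 - 1) * (g*g)"
    using rel3 by (simp add: algebra_simps power2_eq_square)
  hence "E (inverse (q^2 + 1)) * (E (q^2 + 1) * (c * b)) = E (inverse (q^2 + 1)) * (E (q^2 + 1) * (b * c) - E (hbar * qtwo q) * g + E (q^2 - 1) * (g*g))"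
    by simp
  thus ?thesis using q2 by (simp add: Einv distrib_left right_diff_distrib merge1 field_simps E_uminus E_one ri_def qtwo_eq power2_eq_square)
qed

lemma gb2: "g * (b * y) = E (qi * qi) * (b * (g * y)) + E (hbar * (q + qi) * qi * qi) * (b * y)"
  by (simp add: gb flip: mult.assoc) (simp add: distrib_right mult.assoc)
lemma gc2: "g * (c * y) = E (q * q) * (c * (g * y)) + E (- (hbar * (q + qi))) * (c * y)"
  by (simp add: gc flip: mult.assoc) (simp add: distrib_right mult.assoc)
lemma cb2: "c * (b * y) = b * (c * y) + E (- (hbar * (q + qi) * ri)) * (g * y) + E ((q * q - 1) * ri) * (g * (g * y))"
  by (simp add: cb flip: mult.assoc) (simp add: distrib_right mult.assoc)

lemmas nf = distrib_left distrib_right left_diff_distrib right_diff_distrib mult.assoc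
  merge1 merge2 neg1 neg2 diff1 comm_b1 comm_b2 comm_c1 comm_c2 comm_g1 comm_g2
  gb gc cb gb2 gc2 cb2 power2_eq_square mult_minus_left mult_minus_right

definition lc :: "(nat \<Rightarrow> 'k) \<Rightarrow> 'a list \<Rightarrow> 'a" where
  "lc f ms = (\<Sum>i<length ms. E (f i) * ms ! i)"

lemma lc_add: "lc f ms + lc h ms = lc (\<lambda>i. f i + h i) ms"
  by (simp add: lc_def E_add distrib_right sum.distrib)
lemma lc_add2: "lc f ms + (lc h ms + r) = lc (\<lambda>i. f i + h i) ms + r"
  by (simp add: lc_add flip: add.assoc)
lemma lc_scal: "E k * lc f ms = lc (\<lambda>i. k * f i) ms"
  by (simp add: lc_def sum_distrib_left merge1)
lemma lc_basis: "E k * (ms ! j) = lc (\<lambda>i. if i = j then k else 0) ms" if "j < length ms"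
proof -
  have "(\<Sum>i<length ms. E (if i = j then k else 0) * ms ! i) = (\<Sum>i<length ms. if i = j then E k * ms ! i else 0)"
    by (rule sum.cong) (auto simp: E_zero)
  thus ?thesis using that by (simp add: lc_def)
qed
lemma lc_zero: "(\<And>i. i < length ms \<Longrightarrow> f i = 0) \<Longrightarrow> lc f ms = 0"
  by (simp add: lc_def E_zero)

definition "sig = - (E (q * ri) * (E (q * ri) * g^2 + E qi * (b * c) + E q * (c * b)))"

lemma lc_zero_list: "list_all (\<lambda>i. f i = 0) [0..<length ms] \<Longrightarrow> lc f ms = 0"
  by (rule lc_zero) (simp add: list_all_iff)

lemma t_nz: "qtwo q \<noteq> 0"
proof -
  have "qtwo q = (q^2 + 1) / q" using qnz by (simp add: qtwo_def field_simps power2_eq_square)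
  thus ?thesis using qnz q2 by simp
qed

lemmas nf2 = nf minus_add_distrib diff_conv_add_uminus minus_minus

lemma one_b: "b * 1 = b" and one_c: "c * 1 = c" and one_g: "g * 1 = g" by simp_all

lemmas nf3 = nf2 one_b one_c one_g mult_zero_left mult_zero_right add_0_left add_0_right minus_zero

definition "ms = [1, g, g*g, g*(g*g), b, b*g, b*(g*g), c, c*g, c*(g*g), b*c, b*(c*g), b*(b*c), b*(c*c)]"

lemma B: "E k * 1 = lc (\<lambda>i. if i = 0 then k else 0) ms"
    "E k * g = lc (\<lambda>i. if i = 1 then k else 0) ms"
    "E k * (g*g) = lc (\<lambda>i. if i = 2 then k else 0) ms"
    "E k * (g*(g*g)) = lc (\<lambda>i. if i = 3 then k else 0) ms"
    "E k * b = lc (\<lambda>i. if i = 4 then k else 0) ms"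
    "E k * (b*g) = lc (\<lambda>i. if i = 5 then k else 0) ms"
    "E k * (b*(g*g)) = lc (\<lambda>i. if i = 6 then k else 0) ms"
    "E k * c = lc (\<lambda>i. if i = 7 then k else 0) ms"
    "E k * (c*g) = lc (\<lambda>i. if i = 8 then k else 0) ms"
    "E k * (c*(g*g)) = lc (\<lambda>i. if i = 9 then k else 0) ms"
    "E k * (b*c) = lc (\<lambda>i. if i = 10 then k else 0) ms"
    "E k * (b*(c*g)) = lc (\<lambda>i. if i = 11 then k else 0) ms"
    "E k * (b*(b*c)) = lc (\<lambda>i. if i = 12 then k else 0) ms"
    "E k * (b*(c*c)) = lc (\<lambda>i. if i = 13 then k else 0) ms"
  using lc_basis[of 0 ms] lc_basis[of 1 ms] lc_basis[of 2 ms] lc_basis[of 3 ms]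
    lc_basis[of 4 ms] lc_basis[of 5 ms] lc_basis[of 6 ms] lc_basis[of 7 ms]
    lc_basis[of 8 ms] lc_basis[of 9 ms] lc_basis[of 10 ms] lc_basis[of 11 ms]
    lc_basis[of 12 ms] lc_basis[of 13 ms]
  by (simp_all add: ms_def)

lemma to_E1: "E 1 * (X - Y) = 0 \<Longrightarrow> X = Y" by (simp add: E_one)

lemma sig_b: "sig * b = b * sig"
  apply (rule to_E1)
  apply (simp only: nf3 sig_def)
  apply (simp only: B lc_add lc_add2 add.assoc)
  apply (rule lc_zero_list)
  apply (simp add: ms_def)
  apply (insert qs qr)
  apply ((intro conjI)?; algebra)
  done

lemma sig_c: "sig * c = c * sig"
  apply (rule to_E1)
  apply (simp only: nf3 sig_def)
  apply (simp only: B lc_add lc_add2 add.assoc)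
  apply (rule lc_zero_list)
  apply (simp add: ms_def)
  apply (insert qs qr)
  apply ((intro conjI)?; algebra)
  done

lemma sig_g: "sig * g = g * sig"
  apply (rule to_E1)
  apply (simp only: nf3 sig_def)
  apply (simp only: B lc_add lc_add2 add.assoc)
  apply (rule lc_zero_list)
  apply (simp add: ms_def)
  apply (insert qs qr)
  apply ((intro conjI)?; algebra)
  done

lemma Lmat_eq: "Lmat E q b c g = (E (q*q*ri) * g, b, c, - (E (qi*q*ri) * g))"
  unfolding Lmat_def using inv_qtwo by (simp add: divide_inverse qi_def mult.commute mult.left_commute)

lemma sig_tr: "- (E (inverse (qtwo q)) * trR E q (m2mul (Lmat E q b c g) (Lmat E q b c g))) = sig"
  unfolding Lmat_eq inv_qtwo qi_def[symmetric] m2mul.simps trR.simps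
  apply (rule to_E1)
  apply (simp only: nf3 sig_def)
  apply (simp only: B lc_add lc_add2 add.assoc)
  apply (rule lc_zero_list)
  apply (simp add: ms_def)
  apply (insert qs qr)
  apply ((intro conjI)?; algebra)
  done

lemma mat_eq: "m2add (m2add (m2mul (Lmat E q b c g) (Lmat E q b c g)) (m2smul (- E (qi * hbar)) (Lmat E q b c g))) (m2smul sig m2id) = m2zero"
  unfolding Lmat_eq m2mul.simps m2add.simps m2smul.simps m2id_def m2zero_def prod.inject
  apply (intro conjI; rule to_E1)
  apply (simp_all only: nf3 sig_def)
  apply (simp_all only: B lc_add lc_add2 add.assoc)
  apply (rule lc_zero_list, simp add: ms_def, insert qs qr, (intro conjI)?; algebra)+
  done

lemma tr_gen: "trR E q (m2smul (E k) (m2add (Lmat E q b c g) (m2smul (- E m) m2id))) = E (- (k * m * qtwo q)) * 1"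
  unfolding Lmat_eq qtwo_eq qi_def[symmetric] m2smul.simps m2add.simps trR.simps m2id_def
  apply (rule to_E1)
  apply (simp only: nf3)
  apply (simp only: B lc_add lc_add2 add.assoc)
  apply (rule lc_zero_list)
  apply (simp add: ms_def)
  done

end

theorem mainTheorem8:
  fixes emb :: "'k::field_char_0 \<Rightarrow> 'a::ring_1"
    and q hbar :: 'k
    and b c g :: 'a
  assumes alg: "is_algebra_emb emb"
    and q_generic: "\<forall>n::nat. n > 0 \<longrightarrow> q ^ n \<noteq> 1"
    and q_nz: "q \<noteq> 0"
    and rel1: "emb (q^2) * g * b - b * g = emb (hbar * qtwo q) * b"
    and rel2: "g * c - emb (q^2) * c * g = - (emb (hbar * qtwo q) * c)"
    and rel3: "emb (q^2 + 1) * (b * c - c * b) + emb (q^2 - 1) * g^2 = emb (hbar * qtwo q) * g"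
  shows
    "let L = Lmat emb q b c g;
         \<sigma> = - (emb (inverse (qtwo q)) * trR emb q (m2mul L L))
     in \<sigma> = - (emb (inverse (qtwo q)) *
                (emb (inverse (qtwo q)) * g^2 + emb (inverse q) * (b * c) + emb q * (c * b)))
      \<and> \<sigma> * b = b * \<sigma> \<and> \<sigma> * c = c * \<sigma> \<and> \<sigma> * g = g * \<sigma>
      \<and> m2add (m2add (m2mul L L) (m2smul (- emb (inverse q * hbar)) L)) (m2smul \<sigma> m2id) = m2zero
      \<and> (\<forall>\<alpha> s::'k. \<sigma> = emb \<alpha> \<longrightarrow> s^2 = (inverse q)^2 * hbar^2 - 4 * \<alpha> \<longrightarrow> s \<noteq> 0 \<longrightarrow>
           (let \<mu>0 = (inverse q * hbar - s) / 2;
                \<mu>1 = (inverse q * hbar + s) / 2;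
                e0 = m2smul (emb (inverse (\<mu>0 - \<mu>1))) (m2add L (m2smul (- emb \<mu>1) m2id));
                e1 = m2smul (emb (inverse (\<mu>1 - \<mu>0))) (m2add L (m2smul (- emb \<mu>0) m2id))
            in trR emb q e0 = emb (qtwo q / 2 + qtwo q * hbar / (2 * (q * s)))
             \<and> trR emb q e1 = emb (qtwo q / 2 - qtwo q * hbar / (2 * (q * s)))))"
proof -
  have q2: "q^2 + 1 \<noteq> 0"
  proof
    assume h: "q^2 + 1 = 0"
    have "q^4 = (q^2)^2" by simp
    also have "\<dots> = 1" using h by (simp add: eq_neg_iff_add_eq_0[symmetric] add_eq_0_iff2)
    finally show False using q_generic by (metis zero_less_numeral)
  qed
  interpret S: SLq emb q hbar "inverse q" "inverse (q^2+1)" b c g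
    by unfold_locales (use assms q2 in auto)
  have sigeq: "- (emb (inverse (qtwo q)) * (emb (inverse (qtwo q)) * g^2 + emb (inverse q) * (b * c) + emb q * (c * b))) = S.sig"
    unfolding S.sig_def S.inv_qtwo ..
  have tq: "qtwo q = q + inverse q" by (simp add: qtwo_def)
  have tr: "trR emb q (m2smul (emb k) (m2add (Lmat emb q b c g) (m2smul (- emb m) m2id))) = emb (- (k * m * qtwo q))" for k m
    using S.tr_gen[of k m] by simp
  show ?thesis
    unfolding Let_def S.sig_tr sigeq
  proof (intro conjI allI impI)
    show "S.sig = S.sig" by (rule refl)
    show "S.sig * b = b * S.sig" by (rule S.sig_b)
    show "S.sig * c = c * S.sig" by (rule S.sig_c)
    show "S.sig * g = g * S.sig" by (rule S.sig_g)
    show "m2add (m2add (m2mul (Lmat emb q b c g) (Lmat emb q b c g)) (m2smul (- emb (inverse q * hbar)) (Lmat emb q b c g))) (m2smul S.sig m2id) = m2zero"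
      by (rule S.mat_eq)
    fix \<alpha> s :: 'k
    assume "s \<noteq> 0"
    show "trR emb q (m2smul (emb (inverse ((inverse q * hbar - s) / 2 - (inverse q * hbar + s) / 2))) (m2add (Lmat emb q b c g) (m2smul (- emb ((inverse q * hbar + s) / 2)) m2id))) = emb (qtwo q / 2 + qtwo q * hbar / (2 * (q * s)))"
      unfolding tr by (rule arg_cong[where f=emb]) (use \<open>s \<noteq> 0\<close> q_nz in \<open>simp add: field_simps tq\<close>)
    show "trR emb q (m2smul (emb (inverse ((inverse q * hbar + s) / 2 - (inverse q * hbar - s) / 2))) (m2add (Lmat emb q b c g) (m2smul (- emb ((inverse q * hbar - s) / 2)) m2id))) = emb (qtwo q / 2 - qtwo q * hbar / (2 * (q * s)))"
      unfolding tr by (rule arg_cong[where f=emb]) (use \<open>s \<noteq> 0\<close> q_nz in \<open>simp add: field_simps tq\<close>)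
  qed
qed

end
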